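(* Let $(V,\mathcal H,\iota,W)$ be a generalized functional theory. The functionals $\mathcal F_{HK}$, $\mathcal F_p$, $\mathcal F_e$ agree on their common domain, and this common domain is the set $\bigcup_{v\in V}\iota^*(\mathbf G_p(v))$ of pure-state $v$-representable densities.
   Context: A generalized functional theory is a tuple $(V,\mathcal H,\iota,W)$ with $V$ a finite-dimensional real vector space, $\mathcal H$ a finite-dimensional complex Hilbert space, $\iota:V\to i\mathfrak u(\mathcal H)$ linear into the Hermitian operators, $W$ Hermitian. Density operators are regarded as elements of $(i\mathfrak u(\mathcal H))^*$ via the trace pairing; $\iota^*$ is the dual map. $\mathcal P$ = pure states, $\mathcal E$ = density operators, $\mathbf G_p(v)$ = pure ground states of $\iota(v)+W$. $\mathcal F_{HK}$ is defined on $\bigcup_v\iota^*(\mathbf G_p(v))$ by $\mathcal F_{HK}(\rho)=\mathrm{Tr}(\Gamma W)$ for any $v$ and any $\Gamma\in\mathbf G_p(v)$ with $\iota^*(\Gamma)=\rho$ (independent of choices). $\mathcal F_p(\rho)=\min\{\mathrm{Tr}(\Gamma W):\Gamma\in\mathcal P,\iota^*(\Gamma)=\rho\}$ on $\iota^*(\mathcal P)$ and $\mathcal F_e(\rho)=\min\{\mathrm{Tr}(\Gamma W):\Gamma\in\mathcal E,\iota^*(\Gamma)=\rho\}$ on $\iota^*(\mathcal E)$. *)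

theory Defs
  imports "HOL-Analysis.Analysis"
begin

text \<open>The Hilbert space is modelled as the finite-dimensional complex space complex^'n
  (with its standard inner product); operators are complex 'n x 'n matrices.\<close>

definition hermitian :: "complex^'n^'n \<Rightarrow> bool" where
  "hermitian A \<longleftrightarrow> (\<forall>i j. A $ i $ j = cnj (A $ j $ i))"

definition tr :: "complex^'n^'n \<Rightarrow> complex" where
  "tr A = (\<Sum>i\<in>UNIV. A $ i $ i)"

definition density_op :: "complex^'n^'n \<Rightarrow> bool" where
  "density_op G \<longleftrightarrow> hermitian G
     \<and> (\<forall>x::complex^'n. 0 \<le> Re (\<Sum>i\<in>UNIV. \<Sum>j\<in>UNIV. cnj (x $ i) * G $ i $ j * x $ j))
     \<and> tr G = 1"

definition proj :: "complex^'n \<Rightarrow> complex^'n^'n" where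
  "proj psi = (\<chi> i j. psi $ i * cnj (psi $ j))"

definition pure_state :: "complex^'n^'n \<Rightarrow> bool" where
  "pure_state G \<longleftrightarrow> (\<exists>psi. norm psi = 1 \<and> G = proj psi)"

text \<open>Trace pairing Tr(G A) (real for Hermitian G, A).\<close>
definition pairing :: "complex^'n^'n \<Rightarrow> complex^'n^'n \<Rightarrow> real" where
  "pairing G A = Re (tr (G ** A))"

definition gft :: "('v::euclidean_space \<Rightarrow> complex^'n^'n) \<Rightarrow> complex^'n^'n \<Rightarrow> bool" where
  "gft iota W \<longleftrightarrow> linear iota \<and> (\<forall>v. hermitian (iota v)) \<and> hermitian W"

definition dual_map :: "('v \<Rightarrow> complex^'n^'n) \<Rightarrow> complex^'n^'n \<Rightarrow> ('v \<Rightarrow> real)" where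
  "dual_map iota G = (\<lambda>v. pairing G (iota v))"

definition Gp :: "('v \<Rightarrow> complex^'n^'n) \<Rightarrow> complex^'n^'n \<Rightarrow> 'v \<Rightarrow> (complex^'n^'n) set" where
  "Gp iota W v = {G. pure_state G \<and>
      (\<forall>G'. pure_state G' \<longrightarrow> pairing G (iota v + W) \<le> pairing G' (iota v + W))}"

definition dom_HK :: "('v \<Rightarrow> complex^'n^'n) \<Rightarrow> complex^'n^'n \<Rightarrow> ('v \<Rightarrow> real) set" where
  "dom_HK iota W = (\<Union>v. dual_map iota ` Gp iota W v)"

definition dom_p :: "('v \<Rightarrow> complex^'n^'n) \<Rightarrow> ('v \<Rightarrow> real) set" where
  "dom_p iota = dual_map iota ` {G. pure_state G}"

definition dom_e :: "('v \<Rightarrow> complex^'n^'n) \<Rightarrow> ('v \<Rightarrow> real) set" where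
  "dom_e iota = dual_map iota ` {G. density_op G}"

text \<open>Functionals.  F_HK picks the value Tr(G W) for some representing ground state
  (the theorem shows this is independent of the choice).  The minima defining
  F_p and F_e are written as infima.\<close>
definition F_HK :: "('v \<Rightarrow> complex^'n^'n) \<Rightarrow> complex^'n^'n \<Rightarrow> ('v \<Rightarrow> real) \<Rightarrow> real" where
  "F_HK iota W rho = (SOME e. \<exists>v G. G \<in> Gp iota W v \<and> dual_map iota G = rho \<and> e = pairing G W)"

definition F_p :: "('v \<Rightarrow> complex^'n^'n) \<Rightarrow> complex^'n^'n \<Rightarrow> ('v \<Rightarrow> real) \<Rightarrow> real" where
  "F_p iota W rho = Inf {pairing G W | G. pure_state G \<and> dual_map iota G = rho}"

definition F_e :: "('v \<Rightarrow> complex^'n^'n) \<Rightarrow> complex^'n^'n \<Rightarrow> ('v \<Rightarrow> real) \<Rightarrow> real" where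
  "F_e iota W rho = Inf {pairing G W | G. density_op G \<and> dual_map iota G = rho}"

end

theory Submission
  imports Defs
begin

definition qf :: "complex^'n^'n \<Rightarrow> complex^'n \<Rightarrow> complex" where
  "qf A x = (\<Sum>i\<in>UNIV. \<Sum>j\<in>UNIV. cnj (x$i) * A$i$j * x$j)"

definition bf :: "complex^'n^'n \<Rightarrow> complex^'n \<Rightarrow> complex^'n \<Rightarrow> complex" where
  "bf A x y = (\<Sum>i\<in>UNIV. \<Sum>j\<in>UNIV. cnj (x$i) * A$i$j * y$j)"

lemma qf_add: "qf G (x + y) = qf G x + bf G x y + bf G y x + qf G y"
  unfolding qf_def bf_def by (simp add: algebra_simps sum.distrib)

lemma bf_axis2: "bf G x (axis k t) = t * (\<Sum>i\<in>UNIV. cnj (x$i) * G$i$k)"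
  unfolding bf_def axis_def
  by (simp add: sum_distrib_left ac_simps if_distrib if_distribR cong: if_cong)

lemma bf_axis1: "bf G (axis k t) x = cnj t * (\<Sum>j\<in>UNIV. G$k$j * x$j)"
  unfolding bf_def axis_def
  by (subst sum.swap) (simp add: sum_distrib_left ac_simps if_distrib if_distribR cong: if_cong)

lemma qf_axis1: "qf G (axis k t) = cnj t * t * G$k$k"
proof -
  have "(\<Sum>j\<in>UNIV. cnj (axis k t $ i) * G$i$j * axis k t $ j) = (if i = k then cnj t * t * G$k$k else 0)" for i
    by (cases "i = k") (simp_all add: axis_def if_distrib if_distribR ac_simps cong: if_cong)
  then show ?thesis unfolding qf_def by simp
qed

lemma tr_add: "tr (A + B) = tr A + tr B" by (simp add: tr_def sum.distrib)

lemma pairing_add1: "pairing (A + B) H = pairing A H + pairing B H"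
  unfolding pairing_def tr_def matrix_matrix_mult_def
  by (simp add: sum.distrib distrib_right)

lemma pairing_add2: "pairing G (A + B) = pairing G A + pairing G B"
  unfolding pairing_def by (simp add: matrix_add_ldistrib tr_add)

lemma tr_proj_mult: "tr (proj u ** A) = qf A u"
  unfolding tr_def proj_def matrix_matrix_mult_def qf_def
  apply simp
  apply (subst sum.swap)
  apply (simp add: ac_simps)
  done

lemma pairing_proj: "pairing (proj u) A = Re (qf A u)"
  by (simp add: pairing_def tr_proj_mult)

lemma qf_proj: "qf (proj u) x = (\<Sum>i\<in>UNIV. cnj (x$i) * u$i) * cnj (\<Sum>i\<in>UNIV. cnj (x$i) * u$i)"
  unfolding qf_def proj_def
  by (simp add: sum_product ac_simps)

lemma qf_diff: "qf (A - B) x = qf A x - qf B x"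
  unfolding qf_def by (simp add: algebra_simps sum_subtractf)

lemma tr_proj: "tr (proj u) = of_real (\<Sum>i\<in>UNIV. (cmod (u$i))^2)"
  unfolding tr_def proj_def of_real_sum complex_norm_square by simp

lemma norm_sq_vec: "(norm (x::complex^'n))^2 = (\<Sum>i\<in>UNIV. (cmod (x$i))^2)"
  by (simp add: norm_vec_def L2_set_def sum_nonneg)




lemma herm_ij: "hermitian G \<Longrightarrow> G$i$j = cnj (G$j$i)"
  unfolding hermitian_def by blast

lemma herm_cnj: "hermitian G \<Longrightarrow> cnj (G$i$j) = G$j$i"
  using herm_ij[of G j i] by simp

lemma real_of_selfcnj: assumes "z = cnj z" shows "z = of_real (Re z)"
proof -
  have "Im z = - Im z" using arg_cong[OF assms, of Im] by simp
  then show ?thesis by (simp add: complex_eq_iff)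
qed

lemma herm_real_diag: "hermitian G \<Longrightarrow> G$k$k = of_real (Re (G$k$k))"
  by (rule real_of_selfcnj) (rule herm_ij)

lemma herm_row: "hermitian G \<Longrightarrow> (\<Sum>j\<in>UNIV. G$k$j * x$j) = cnj (\<Sum>i\<in>UNIV. cnj (x$i) * G$i$k)"
  by (simp add: herm_cnj mult.commute)

lemma qf_expand:
  assumes "hermitian G"
  shows "qf G (x + axis k t) = qf G x + t * (\<Sum>i\<in>UNIV. cnj (x$i) * G$i$k)
     + cnj t * cnj (\<Sum>i\<in>UNIV. cnj (x$i) * G$i$k) + cnj t * t * G$k$k"
  unfolding qf_add bf_axis1 bf_axis2 qf_axis1 herm_row[OF assms] by simp

lemma psd_bound:
  fixes G H :: "complex^'n^'n"
  assumes "finite S" "hermitian G" "\<forall>x. 0 \<le> Re (qf G x)" "\<forall>i j. i \<notin> S \<longrightarrow> G$i$j = 0"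
    and Hb: "\<forall>x. m * (\<Sum>i\<in>UNIV. (cmod (x$i))^2) \<le> Re (qf H x)"
  shows "m * Re (tr G) \<le> pairing G H"
  using assms(1-4)
proof (induction S arbitrary: G rule: finite_induct)
  case empty
  then have "G = 0" by (simp add: vec_eq_iff)
  then show ?case by (simp add: pairing_def tr_def)
next
  case (insert k S G)
  define g where "g = Re (G$k$k)"
  define a where "a x = (\<Sum>i\<in>UNIV. cnj (x$i) * G$i$k)" for x :: "complex^'n"
  have Gkk: "G$k$k = of_real g" using herm_real_diag[OF insert.prems(1)] g_def by simp
  have exp: "qf G (x + axis k t) = qf G x + t * a x + cnj t * cnj (a x) + cnj t * t * of_real g" for x t
    using qf_expand[OF insert.prems(1)] Gkk a_def by simp
  have g0: "0 \<le> g"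
    using insert.prems(2) qf_axis1[of G k 1] Gkk by (metis Re_complex_of_real complex_cnj_one mult_1)
  show ?case
  proof (cases "g = 0")
    case True
    have col: "G$j$k = 0" for j
    proof (rule ccontr)
      assume ne: "G$j$k \<noteq> 0"
      let ?x = "axis j 1 :: complex^'n"
      have ax: "a ?x = G$j$k" 
        by (simp add: a_def axis_def if_distrib if_distribR cong: if_cong)
      define c where "c = Re (qf G ?x)"
      define s where "s = (c + 1) / (2 * (cmod (G$j$k))^2)"
      define t where "t = - (of_real s * cnj (G$j$k))"
      have pos: "0 < (cmod (G$j$k))^2" using ne by simp
      have "0 \<le> Re (qf G (?x + axis k t))" using insert.prems(2) by blast
      also have "Re (qf G (?x + axis k t)) = c - 2 * s * (cmod (G$j$k))^2"
      proof -
        have h1: "t * G$j$k = - of_real (s * (cmod (G$j$k))^2)"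
          unfolding t_def of_real_mult complex_norm_square by (simp add: algebra_simps)
        have h2: "cnj t * cnj (G$j$k) = - of_real (s * (cmod (G$j$k))^2)"
          unfolding t_def of_real_mult complex_norm_square by (simp add: algebra_simps)
        show ?thesis unfolding exp ax True h1 h2 c_def by simp
      qed
      also have "\<dots> = -1" unfolding s_def using pos by (simp add: field_simps)
      finally show False by simp
    qed
    have row: "G$k$j = 0" for j
      using col[of j] herm_ij[OF insert.prems(1), of k j] by simp
    have supp: "\<forall>i j. i \<notin> S \<longrightarrow> G$i$j = 0"
      using row insert.prems(3) by (metis insert_iff)
    show ?thesis using insert.IH[OF insert.prems(1,2) supp] .
  next
    case False
    then have gp: "0 < g" using g0 by simp
    define u where "u = (\<chi> i. G$i$k / of_real (sqrt g))"
    define G' where "G' = G - proj u"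
    have sq: "of_real (sqrt g) * of_real (sqrt g) = (of_real g :: complex)"
      using gp by (simp flip: of_real_mult)
    have sqnz: "(of_real (sqrt g) :: complex) \<noteq> 0" using gp by simp
    have herm: "hermitian G'"
    proof (unfold hermitian_def, intro allI)
      fix i j
      have "G$i$j = cnj (G$j$i)" by (rule herm_ij[OF insert.prems(1)])
      then show "G'$i$j = cnj (G'$j$i)" unfolding G'_def proj_def by simp
    qed
    have supp: "\<forall>i j. i \<notin> S \<longrightarrow> G'$i$j = 0"
    proof (intro allI impI)
      fix i j assume iS: "i \<notin> S"
      show "G'$i$j = 0"
      proof (cases "i = k")
        case True
        have "cnj (G$j$k) = G$k$j" using herm_ij[OF insert.prems(1), of k j] by simp
        then have "G'$k$j = G$k$j - G$k$k * G$k$j / (of_real (sqrt g) * of_real (sqrt g))"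
          unfolding G'_def proj_def u_def by simp
        also have "\<dots> = 0" unfolding sq Gkk using gp by simp
        finally show ?thesis using True by simp
      next
        case False
        then have "i \<notin> insert k S" using iS by simp
        then have "G$i$j = 0" "G$i$k = 0" using insert.prems(3) by auto
        then show ?thesis unfolding G'_def proj_def u_def by simp
      qed
    qed
    have psd: "\<forall>x. 0 \<le> Re (qf G' x)"
    proof
      fix x :: "complex^'n"
      have "(\<Sum>i\<in>UNIV. cnj (x$i) * u$i) = a x / of_real (sqrt g)"
        unfolding u_def a_def by (simp add: sum_divide_distrib)
      then have "qf (proj u) x = a x * cnj (a x) / of_real g"
        unfolding qf_proj sq[symmetric] by simp
      then have e1: "qf G' x = qf G x - a x * cnj (a x) / of_real g"
        unfolding G'_def qf_diff by simp
      define t where "t = - cnj (a x) / of_real g"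
      have "qf G (x + axis k t) = qf G x - a x * cnj (a x) / of_real g"
        unfolding exp t_def using gp by (simp add: field_simps)
      then have "qf G' x = qf G (x + axis k t)" using e1 by simp
      then show "0 \<le> Re (qf G' x)" using insert.prems(2) by simp
    qed
    have IH: "m * Re (tr G') \<le> pairing G' H" using insert.IH[OF herm psd supp] .
    have GG: "G = G' + proj u" by (simp add: G'_def)
    have "m * Re (tr (proj u)) \<le> pairing (proj u) H"
      unfolding pairing_proj tr_proj using Hb by simp
    then show ?thesis using IH unfolding GG tr_add pairing_add1 by (simp add: algebra_simps)
  qed
qed


lemma qf_zero: "qf A 0 = 0" by (simp add: qf_def)

lemma qf_scaleR: "qf A (c *\<^sub>R x) = of_real (c^2) * qf A x"
proof -
  have c: "(c *\<^sub>R x)$i = of_real c * x$i" for i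
    by (simp only: vector_scaleR_component) (simp add: scaleR_conv_of_real)
  show ?thesis unfolding qf_def c
    by (simp add: sum_distrib_left power2_eq_square ac_simps)
qed

lemma proj_density:
  assumes "norm psi = 1"
  shows "density_op (proj psi)"
proof -
  have h: "hermitian (proj psi)" unfolding hermitian_def proj_def by simp
  have p: "0 \<le> Re (\<Sum>i\<in>UNIV. \<Sum>j\<in>UNIV. cnj (x $ i) * proj psi $ i $ j * x $ j)" for x
  proof -
    have "(\<Sum>i\<in>UNIV. \<Sum>j\<in>UNIV. cnj (x $ i) * proj psi $ i $ j * x $ j) = qf (proj psi) x"
      by (simp add: qf_def)
    also have "\<dots> = of_real ((cmod (\<Sum>i\<in>UNIV. cnj (x$i) * psi$i))^2)"
      unfolding qf_proj complex_norm_square ..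
    finally show ?thesis by simp
  qed
  have t: "tr (proj psi) = 1"
    unfolding tr_proj norm_sq_vec[symmetric] assms by simp
  show ?thesis unfolding density_op_def using h p t by blast
qed

lemma pure_density: "pure_state G \<Longrightarrow> density_op G"
  unfolding pure_state_def using proj_density by blast

lemma ground_bound:
  assumes G0: "G0 \<in> Gp iota W v" and G: "density_op G"
  shows "pairing G0 (iota v + W) \<le> pairing G (iota v + W)"
proof -
  define H where "H = iota v + W"
  define m where "m = pairing G0 H"
  have min: "m \<le> pairing G' H" if "pure_state G'" for G'
    using G0 that unfolding Gp_def m_def H_def by blast
  have Hb: "\<forall>x. m * (\<Sum>i\<in>UNIV. (cmod (x$i))^2) \<le> Re (qf H x)"
  proof
    fix x :: "complex^'a"
    show "m * (\<Sum>i\<in>UNIV. (cmod (x$i))^2) \<le> Re (qf H x)"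
    proof (cases "x = 0")
      case True
      then show ?thesis by (simp add: qf_zero)
    next
      case False
      define n where "n = norm x"
      have np: "0 < n" using False n_def by simp
      define psi where "psi = (1 / n) *\<^sub>R x"
      have "norm psi = 1" using np unfolding psi_def n_def by simp
      then have "pure_state (proj psi)" unfolding pure_state_def by blast
      then have "m \<le> Re (qf H psi)" using min pairing_proj by metis
      also have "Re (qf H psi) = Re (qf H x) / n^2"
        unfolding psi_def qf_scaleR by (simp add: power_divide)
      finally have "m * n^2 \<le> Re (qf H x)" using np by (simp add: field_simps)
      then show ?thesis unfolding n_def norm_sq_vec .
    qed
  qed
  have "m * Re (tr G) \<le> pairing G H"
    by (rule psd_bound[of UNIV G m H]) (use G Hb in \<open>auto simp: density_op_def qf_def\<close>)
  moreover have "Re (tr G) = 1" using G unfolding density_op_def by simp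
  ultimately show ?thesis unfolding m_def H_def by simp
qed

lemma ground_W_le:
  assumes G0: "G0 \<in> Gp iota W v" and G: "density_op G"
    and eq: "dual_map iota G = dual_map iota G0"
  shows "pairing G0 W \<le> pairing G W"
proof -
  have "pairing G0 (iota v + W) \<le> pairing G (iota v + W)" by (rule ground_bound[OF G0 G])
  moreover have "pairing G (iota v) = pairing G0 (iota v)"
    using fun_cong[OF eq, of v] unfolding dual_map_def by simp
  ultimately show ?thesis unfolding pairing_add2 by simp
qed

theorem proposition2p31:
  fixes iota :: "'v::euclidean_space \<Rightarrow> complex^'n^'n" and W :: "complex^'n^'n"
  assumes "gft iota W"
  shows "dom_HK iota W \<inter> dom_p iota \<inter> dom_e iota = dom_HK iota W
       \<and> (\<forall>rho \<in> dom_HK iota W \<inter> dom_p iota \<inter> dom_e iota.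
           F_HK iota W rho = F_p iota W rho \<and> F_p iota W rho = F_e iota W rho)"
proof -
  have gp_pure: "pure_state G" if "G \<in> Gp iota W v" for G v
    using that unfolding Gp_def by blast
  have sub: "dom_HK iota W \<subseteq> dom_p iota \<inter> dom_e iota"
  proof
    fix rho assume "rho \<in> dom_HK iota W"
    then obtain v G0 where G0: "G0 \<in> Gp iota W v" and r: "rho = dual_map iota G0"
      unfolding dom_HK_def by blast
    have "pure_state G0" using gp_pure[OF G0] .
    then show "rho \<in> dom_p iota \<inter> dom_e iota"
      unfolding dom_p_def dom_e_def r using pure_density by blast
  qed
  have vals: "F_HK iota W rho = pairing G0 W \<and> F_p iota W rho = pairing G0 W \<and> F_e iota W rho = pairing G0 W"
    if G0: "G0 \<in> Gp iota W v" and r: "rho = dual_map iota G0" for rho G0 v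
  proof -
    have pG0: "pure_state G0" using gp_pure[OF G0] .
    have dG0: "density_op G0" using pure_density[OF pG0] .
    have low: "pairing G0 W \<le> pairing G W" if "density_op G" "dual_map iota G = rho" for G
      using ground_W_le[OF G0] that r by simp
    have hk: "F_HK iota W rho = pairing G0 W"
      unfolding F_HK_def
    proof (rule someI2[where a = "pairing G0 W"])
      show "\<exists>v G. G \<in> Gp iota W v \<and> dual_map iota G = rho \<and> pairing G0 W = pairing G W"
        using G0 r by blast
    next
      fix e assume "\<exists>v G. G \<in> Gp iota W v \<and> dual_map iota G = rho \<and> e = pairing G W"
      then obtain v' G' where G': "G' \<in> Gp iota W v'" "dual_map iota G' = rho" "e = pairing G' W"
        by blast
      have "pairing G0 W \<le> pairing G' W" using low pure_density gp_pure G' by blast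
      moreover have "pairing G' W \<le> pairing G0 W"
        using ground_W_le[OF G'(1) dG0] G'(2) r by simp
      ultimately show "e = pairing G0 W" using G'(3) by simp
    qed
    have fp: "F_p iota W rho = pairing G0 W"
      unfolding F_p_def
      by (rule cInf_eq_minimum) (use pG0 r low pure_density in auto)
    have fe: "F_e iota W rho = pairing G0 W"
      unfolding F_e_def
      by (rule cInf_eq_minimum) (use dG0 r low in auto)
    show ?thesis using hk fp fe by simp
  qed
  show ?thesis
  proof
    show "dom_HK iota W \<inter> dom_p iota \<inter> dom_e iota = dom_HK iota W" using sub by blast
  next
    show "\<forall>rho \<in> dom_HK iota W \<inter> dom_p iota \<inter> dom_e iota.
           F_HK iota W rho = F_p iota W rho \<and> F_p iota W rho = F_e iota W rho"
    proof
      fix rho assume "rho \<in> dom_HK iota W \<inter> dom_p iota \<inter> dom_e iota"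
      then obtain v G0 where G0: "G0 \<in> Gp iota W v" and r: "rho = dual_map iota G0"
        unfolding dom_HK_def by blast
      show "F_HK iota W rho = F_p iota W rho \<and> F_p iota W rho = F_e iota W rho"
        using vals[OF G0 r] by simp
    qed
  qed
qed

end
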